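(* Let $H_\omega = -\Delta + V_\omega$ be the Anderson Hamiltonian on $\ell^2(\mathbb{Z}^d)$. Then, with probability one, $H_\omega$ has no eigenvalue $E$ admitting two linearly independent fast decaying eigenfunctions.
   Context: The Anderson Hamiltonian is the random operator $H_\omega = -\Delta + V_\omega$ on $\ell^2(\mathbb{Z}^d)$, where $\Delta(x,y)=1$ if $|x-y|=1$ and $\Delta(x,y)=0$ otherwise, and the random potential $V_\omega = \{V_\omega(x), x\in\mathbb{Z}^d\}$ (acting by multiplication) consists of independent identically distributed random variables whose common probability distribution $\mu$ has a bounded density $\rho$. Write $\langle x\rangle = \sqrt{1+|x|^2}$. A vector $\varphi\in\ell^2(\mathbb{Z}^d)$ has $\beta$-decay if $|\varphi(x)|\le C_\varphi \langle x\rangle^{-\beta}$ for all $x$ and some constant $C_\varphi<\infty$; $\varphi$ is called fast decaying if it has $\beta$-decay for some $\beta > \frac{5d}{2}$. *)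

theory Defs
  imports "HOL-Probability.Probability"
begin

text \<open>Lattice sites of Z^d are modelled as vectors int ^ 'd, where the finite type 'd
  indexes the d coordinates (d = CARD('d)).  Wave functions are complex valued.\<close>

definition sqdist_lat :: "int ^ 'd \<Rightarrow> int ^ 'd \<Rightarrow> int" where
  "sqdist_lat x y = (\<Sum>i\<in>UNIV. (x $ i - y $ i)^2)"

definition lat_neighbors :: "int ^ 'd \<Rightarrow> (int ^ 'd) set" where
  "lat_neighbors x = {y. sqdist_lat x y = 1}"

text \<open>Discrete Laplacian (adjacency operator) as in the paper: Delta(x,y) = 1 iff |x-y| = 1.\<close>
definition lat_Delta :: "(int ^ 'd \<Rightarrow> complex) \<Rightarrow> int ^ 'd \<Rightarrow> complex" where
  "lat_Delta \<phi> x = (\<Sum>y\<in>lat_neighbors x. \<phi> y)"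

definition anderson_H :: "(int ^ 'd \<Rightarrow> real) \<Rightarrow> (int ^ 'd \<Rightarrow> complex) \<Rightarrow> int ^ 'd \<Rightarrow> complex" where
  "anderson_H V \<phi> x = - lat_Delta \<phi> x + complex_of_real (V x) * \<phi> x"

definition in_l2 :: "(int ^ 'd \<Rightarrow> complex) \<Rightarrow> bool" where
  "in_l2 \<phi> \<longleftrightarrow> (\<lambda>x. (norm (\<phi> x))^2) summable_on UNIV"

definition jbracket :: "int ^ 'd \<Rightarrow> real" where
  "jbracket x = sqrt (1 + real_of_int (\<Sum>i\<in>UNIV. (x $ i)^2))"

definition has_decay :: "real \<Rightarrow> (int ^ 'd \<Rightarrow> complex) \<Rightarrow> bool" where
  "has_decay \<beta> \<phi> \<longleftrightarrow> (\<exists>C. \<forall>x. norm (\<phi> x) \<le> C * jbracket x powr (- \<beta>))"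

definition fast_decaying :: "(int ^ 'd \<Rightarrow> complex) \<Rightarrow> bool" where
  "fast_decaying \<phi> \<longleftrightarrow> (\<exists>\<beta>. \<beta> > 5 * real CARD('d) / 2 \<and> has_decay \<beta> \<phi>)"

definition is_eigenfunction :: "(int ^ 'd \<Rightarrow> real) \<Rightarrow> real \<Rightarrow> (int ^ 'd \<Rightarrow> complex) \<Rightarrow> bool" where
  "is_eigenfunction V E \<phi> \<longleftrightarrow> in_l2 \<phi> \<and> \<phi> \<noteq> (\<lambda>_. 0) \<and> (\<forall>x. anderson_H V \<phi> x = of_real E * \<phi> x)"

definition lin_indep2 :: "('a \<Rightarrow> complex) \<Rightarrow> ('a \<Rightarrow> complex) \<Rightarrow> bool" where
  "lin_indep2 f g \<longleftrightarrow> (\<forall>a b. (\<forall>x. a * f x + b * g x = 0) \<longrightarrow> a = 0 \<and> b = 0)"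

end

theory Submission
  imports Defs
begin


definition unitv :: "(int ^ 'd) set" where
  "unitv = {e. (\<Sum>i\<in>UNIV. (e $ i)^2) = 1}"

lemma unitv_finite: "finite (unitv :: (int ^ 'd) set)"
proof -
  have "unitv \<subseteq> vec_lambda ` (Pi\<^sub>E (UNIV::'d set) (\<lambda>_. {-1,0,1::int}))"
  proof
    fix e :: "int ^ 'd" assume e: "e \<in> unitv"
    have sq: "(e $ i)^2 \<le> 1" for i
    proof -
      have "(e $ i)^2 \<le> (\<Sum>j\<in>UNIV. (e $ j)^2)"
        by (rule member_le_sum) auto
      then show ?thesis using e by (simp add: unitv_def)
    qed
    have "e $ i \<in> {-1,0,1}" for i
    proof -
      have "\<bar>e $ i\<bar> \<le> 1" using abs_square_le_1[of "e $ i"] sq[of i] by simp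
      then show ?thesis by (auto simp: abs_le_iff)
    qed
    then have "(\<lambda>i. e $ i) \<in> Pi\<^sub>E UNIV (\<lambda>_. {-1,0,1::int})" by auto
    then show "e \<in> vec_lambda ` (Pi\<^sub>E UNIV (\<lambda>_. {-1,0,1::int}))"
      by (metis image_eqI vec_nth_inverse)
  qed
  moreover have "finite (Pi\<^sub>E (UNIV::'d set) (\<lambda>_. {-1,0,1::int}))"
    by (rule finite_PiE) auto
  ultimately show ?thesis by (meson finite_surj)
qed

lemma unitv_uminus: "e \<in> unitv \<Longrightarrow> - e \<in> unitv"
  by (simp add: unitv_def)

lemma lat_neighbors_eq: "lat_neighbors y = (\<lambda>e. y + e) ` unitv"
proof -
  have nb: "w \<in> lat_neighbors y \<longleftrightarrow> w - y \<in> unitv" for w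
  proof -
    have "(\<Sum>i\<in>UNIV. (y $ i - w $ i)^2) = (\<Sum>i\<in>UNIV. ((w - y) $ i)^2)"
      by (intro sum.cong) (auto simp: power2_commute)
    then show ?thesis by (simp add: lat_neighbors_def sqdist_lat_def unitv_def)
  qed
  have "w \<in> (\<lambda>e. y + e) ` unitv \<longleftrightarrow> w - y \<in> unitv" for w
  proof
    assume "w - y \<in> unitv"
    then show "w \<in> (\<lambda>e. y + e) ` unitv" by (intro image_eqI[where x="w - y"]) auto
  qed auto
  with nb show ?thesis by blast
qed

lemma lat_Delta_eq: "lat_Delta f y = (\<Sum>e\<in>unitv. f (y + e))"
  unfolding lat_Delta_def lat_neighbors_eq
  by (subst sum.reindex) (auto simp: inj_on_def)

lemma summable_on_sum_fin:
  fixes f :: "'i \<Rightarrow> 'a \<Rightarrow> 'b::{topological_comm_monoid_add}"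
  assumes "finite I" "\<And>i. i \<in> I \<Longrightarrow> f i summable_on A"
  shows "(\<lambda>y. \<Sum>i\<in>I. f i y) summable_on A"
  using assms by (induction I rule: finite_induct) (auto intro!: summable_on_add)

lemma infsum_sum_fin:
  fixes f :: "'i \<Rightarrow> 'a \<Rightarrow> 'b::{topological_comm_monoid_add, t2_space}"
  assumes "finite I" "\<And>i. i \<in> I \<Longrightarrow> f i summable_on A"
  shows "infsum (\<lambda>y. \<Sum>i\<in>I. f i y) A = (\<Sum>i\<in>I. infsum (f i) A)"
  using assms
proof (induction I rule: finite_induct)
  case (insert j I)
  have "infsum (\<lambda>y. \<Sum>i\<in>insert j I. f i y) A = infsum (\<lambda>y. f j y + (\<Sum>i\<in>I. f i y)) A"
    using insert by simp
  also have "\<dots> = infsum (f j) A + infsum (\<lambda>y. \<Sum>i\<in>I. f i y) A"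
    using insert by (intro infsum_add summable_on_sum_fin) auto
  finally show ?case using insert by simp
qed simp

lemma in_l2_shift: "in_l2 f \<Longrightarrow> in_l2 (\<lambda>y. f (y + e))"
proof -
  assume "in_l2 f"
  then have "(\<lambda>y. (norm (f y))^2) summable_on ((\<lambda>y. y + e) ` UNIV)"
    by (simp add: in_l2_def surj_plus)
  then show ?thesis unfolding in_l2_def
    by (subst (asm) summable_on_reindex) (auto simp: o_def)
qed

lemma norm_mult_le_sq: "norm (a::complex) * norm (b::complex) \<le> ((norm a)^2 + (norm b)^2) / 2"
proof -
  have "0 \<le> (norm a - norm b)^2" by simp
  then show ?thesis unfolding power2_diff by (simp add: field_simps)
qed

lemma l2_prod_abs_summable:
  assumes "in_l2 f" "in_l2 g"
  shows "(\<lambda>y. norm (cnj (g y) * f y)) summable_on UNIV"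
proof (rule summable_on_comparison_test)
  show "(\<lambda>y. ((norm (g y))^2 + (norm (f y))^2) * (1/2)) summable_on UNIV"
    using assms unfolding in_l2_def
    by (intro summable_on_cmult_left summable_on_add) auto
next
  fix y
  show "norm (cnj (g y) * f y) \<le> ((norm (g y))^2 + (norm (f y))^2) * (1/2)"
    using norm_mult_le_sq[of "g y" "f y"] by (simp add: norm_mult)
qed auto

lemma l2_prod_summable:
  assumes "in_l2 f" "in_l2 g"
  shows "(\<lambda>y. cnj (g y) * f y) summable_on UNIV"
  by (rule abs_summable_summable[OF l2_prod_abs_summable[OF assms]])

lemma delta_sym:
  fixes f g :: "int ^ 'd \<Rightarrow> complex"
  assumes f: "in_l2 f" and g: "in_l2 g"
  shows "infsum (\<lambda>y. cnj (g y) * lat_Delta f y) UNIV = infsum (\<lambda>y. cnj (lat_Delta g y) * f y) UNIV"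
proof -
  have s1: "(\<lambda>y. cnj (g y) * f (y + e)) summable_on UNIV" for e
    using l2_prod_summable[OF in_l2_shift[OF f] g] .
  have s2: "(\<lambda>y. cnj (g (y + e)) * f y) summable_on UNIV" for e
    using l2_prod_summable[OF f in_l2_shift[OF g]] .
  have "infsum (\<lambda>y. cnj (g y) * lat_Delta f y) UNIV
      = infsum (\<lambda>y. \<Sum>e\<in>unitv. cnj (g y) * f (y + e)) UNIV"
    by (simp add: lat_Delta_eq sum_distrib_left)
  also have "\<dots> = (\<Sum>e\<in>unitv. infsum (\<lambda>y. cnj (g y) * f (y + e)) UNIV)"
    by (rule infsum_sum_fin) (auto simp: unitv_finite s1)
  also have "\<dots> = (\<Sum>e\<in>unitv. infsum (\<lambda>y. cnj (g (y + - e)) * f y) UNIV)"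
  proof (rule sum.cong[OF refl])
    fix e :: "int ^ 'd"
    show "infsum (\<lambda>y. cnj (g y) * f (y + e)) UNIV = infsum (\<lambda>y. cnj (g (y + - e)) * f y) UNIV"
      by (rule infsum_reindex_bij_witness[where i="\<lambda>y. y - e" and j="\<lambda>y. y + e"]) auto
  qed
  also have "\<dots> = (\<Sum>e\<in>unitv. infsum (\<lambda>y. cnj (g (y + e)) * f y) UNIV)"
    by (rule sum.reindex_bij_witness[where i="uminus" and j="uminus"]) (auto simp: unitv_uminus)
  also have "\<dots> = infsum (\<lambda>y. \<Sum>e\<in>unitv. cnj (g (y + e)) * f y) UNIV"
    by (rule infsum_sum_fin[symmetric]) (auto simp: unitv_finite s2)
  also have "\<dots> = infsum (\<lambda>y. cnj (lat_Delta g y) * f y) UNIV"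
    by (simp add: lat_Delta_eq sum_distrib_right)
  finally show ?thesis .
qed




definition hz :: "int \<Rightarrow> real" where "hz n = inverse (1 + real_of_int n ^ 2)"

lemma hz_nat_summable: "summable (\<lambda>n::nat. hz (int n))"
proof (rule summable_comparison_test_ev)
  show "summable (\<lambda>n::nat. inverse (real n ^ 2))"
    by (rule inverse_power_summable) simp
  show "\<forall>\<^sub>F n in sequentially. norm (hz (int n)) \<le> inverse (real n ^ 2)"
  proof (rule eventually_sequentiallyI[of 1])
    fix n :: nat assume "1 \<le> n"
    then have "0 < real n ^ 2" by simp
    then show "norm (hz (int n)) \<le> inverse (real n ^ 2)"
      unfolding hz_def by (auto intro!: le_imp_inverse_le)
  qed
qed

lemma hz_nonneg: "0 \<le> hz n"
  by (simp add: hz_def)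

lemma hz_summable: "hz summable_on UNIV"
proof -
  have A: "hz summable_on (int ` UNIV)"
  proof -
    have "(hz \<circ> int) summable_on UNIV"
      using hz_nat_summable summable_on_UNIV_nonneg_real_iff[of "hz \<circ> int"] hz_nonneg
      by (simp add: o_def)
    then show ?thesis by (subst summable_on_reindex) (auto simp: inj_on_def)
  qed
  have B: "hz summable_on ((\<lambda>n. - int n) ` UNIV)"
  proof -
    have "((\<lambda>n. hz (- int n))) summable_on UNIV"
      using hz_nat_summable summable_on_UNIV_nonneg_real_iff[of "\<lambda>n. hz (- int n)"] hz_nonneg
      by (simp add: hz_def)
    then show ?thesis by (subst summable_on_reindex) (auto simp: inj_on_def o_def)
  qed
  have "UNIV = int ` UNIV \<union> (\<lambda>n. - int n) ` UNIV"
    by (auto simp: image_iff) (metis nonneg_int_cases neg_int_cases less_le_not_le linorder_le_less_linear nat_int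
        verit_minus_simplify(4))
  then show ?thesis using summable_on_union[OF A B] by simp
qed

definition gprod :: "int ^ 'd \<Rightarrow> real" where "gprod y = (\<Prod>i\<in>UNIV. hz (y $ i))"

lemma gprod_summable: "(gprod :: int ^ 'd \<Rightarrow> real) summable_on UNIV"
proof -
  have "Infinite_Set_Sum.abs_summable_on (\<lambda>g. \<Prod>i\<in>(UNIV::'d set). hz (g i)) (Pi\<^sub>E UNIV (\<lambda>_. UNIV))"
  proof (rule abs_summable_on_prod_PiE)
    show "Infinite_Set_Sum.abs_summable_on hz UNIV" for i :: 'd
      using hz_summable hz_nonneg by (intro abs_summable_equivalent[THEN iffD1]) simp
  qed auto
  then have "(\<lambda>g. norm (\<Prod>i\<in>(UNIV::'d set). hz (g i))) summable_on (Pi\<^sub>E UNIV (\<lambda>_. UNIV))"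
    by (rule abs_summable_equivalent[THEN iffD2])
  then have "((gprod :: int ^ 'd \<Rightarrow> real) \<circ> vec_lambda) summable_on (Pi\<^sub>E UNIV (\<lambda>_. UNIV))"
    using hz_nonneg by (simp add: prod_nonneg abs_prod[symmetric] o_def gprod_def)
  then have "((gprod :: int ^ 'd \<Rightarrow> real) \<circ> vec_lambda) summable_on UNIV"
    by simp
  then have "(gprod :: int ^ 'd \<Rightarrow> real) summable_on (range vec_lambda)"
    by (subst summable_on_reindex) (auto simp: inj_on_def vec_lambda_inject)
  moreover have "range vec_lambda = (UNIV :: (int ^ 'd) set)"
    by (metis surj_def vec_nth_inverse)
  ultimately show ?thesis by simp
qed

definition wt :: "int ^ 'd \<Rightarrow> real" where "wt y = jbracket y powr (- real CARD('d))"

lemma jbracket_ge1: "1 \<le> jbracket y"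
  unfolding jbracket_def by (simp add: sum_nonneg)

lemma wt_pos: "0 < wt y"
  using jbracket_ge1[of y] by (simp add: wt_def)

lemma wt_le1: "wt y \<le> 1"
  using jbracket_ge1[of y] unfolding wt_def
  by (simp add: powr_minus inverse_le_1_iff ge_one_powr_ge_zero)

lemma wt_sq_le: "(wt (y :: int ^ 'd))^2 \<le> gprod y"
proof -
  define s where "s = 1 + real_of_int (\<Sum>i\<in>UNIV. (y $ i)^2)"
  have s1: "1 \<le> s" by (simp add: s_def sum_nonneg)
  have "(wt y)^2 = s powr (- real CARD('d))"
  proof -
    have "wt y = (s powr (1/2)) powr (- real CARD('d))"
      using s1 by (simp add: wt_def jbracket_def s_def powr_half_sqrt)
    also have "\<dots> = s powr (- real CARD('d) / 2)"
      by (simp add: powr_powr)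
    finally have "(wt y)^2 = (s powr (- real CARD('d) / 2))^2" by simp
    also have "\<dots> = s powr (- real CARD('d))"
      using s1 by (subst powr_power) auto
    finally show ?thesis .
  qed
  also have "\<dots> = inverse (s ^ CARD('d))"
    using s1 by (simp add: powr_minus powr_realpow)
  also have "\<dots> \<le> inverse (\<Prod>i\<in>UNIV. 1 + real_of_int (y $ i) ^ 2)"
  proof (rule le_imp_inverse_le)
    have "(\<Prod>i\<in>UNIV. 1 + real_of_int (y $ i) ^ 2) \<le> (\<Prod>i\<in>(UNIV::'d set). s)"
    proof (rule prod_mono)
      fix i :: 'd
      have "real_of_int ((y $ i)^2) \<le> real_of_int (\<Sum>j\<in>UNIV. (y $ j)^2)"
        by (simp only: of_int_le_iff, rule member_le_sum) auto
      then show "0 \<le> 1 + real_of_int (y $ i) ^ 2 \<and> 1 + real_of_int (y $ i) ^ 2 \<le> s"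
        by (simp add: s_def)
    qed
    then show "(\<Prod>i\<in>UNIV. 1 + real_of_int (y $ i) ^ 2) \<le> s ^ CARD('d)"
      by simp
    show "0 < (\<Prod>i\<in>UNIV. 1 + real_of_int (y $ i) ^ 2)"
      by (intro prod_pos) (simp add: add_pos_nonneg)
  qed
  also have "\<dots> = gprod y"
    using prod_inversef[of "\<lambda>i. 1 + real_of_int (y $ i) ^ 2" UNIV]
    by (simp add: gprod_def hz_def o_def)
  finally show ?thesis .
qed

lemma wt_sq_summable: "(\<lambda>y::int ^ 'd. (wt y)^2) summable_on UNIV"
  by (rule summable_on_comparison_test[OF gprod_summable]) (auto simp: wt_sq_le)

definition decayC :: "real \<Rightarrow> (int ^ 'd \<Rightarrow> complex) \<Rightarrow> bool" where
  "decayC C f \<longleftrightarrow> (\<forall>y. norm (f y) \<le> C * wt y)"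

definition Mw :: "'d::finite itself \<Rightarrow> real" where "Mw _ = infsum (\<lambda>y::int ^ 'd. (wt y)^2) UNIV"

lemma decayC_l2:
  fixes f :: "int ^ 'd \<Rightarrow> complex"
  assumes "decayC C f"
  shows "in_l2 f" and "infsum (\<lambda>y. (norm (f y))^2) UNIV \<le> C^2 * Mw TYPE('d)"
proof -
  have b: "(norm (f y))^2 \<le> C^2 * (wt y)^2" for y
  proof -
    have "norm (f y) \<le> C * wt y" using assms by (simp add: decayC_def)
    then have "(norm (f y))^2 \<le> (C * wt y)^2"
      by (intro power_mono) auto
    then show ?thesis by (simp add: power_mult_distrib)
  qed
  have s: "(\<lambda>y::int ^ 'd. C^2 * (wt y)^2) summable_on UNIV"
    by (intro summable_on_cmult_right wt_sq_summable)
  show "in_l2 f" unfolding in_l2_def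
    by (rule summable_on_comparison_test[OF s]) (auto simp: b)
  then have "infsum (\<lambda>y. (norm (f y))^2) UNIV \<le> infsum (\<lambda>y::int ^ 'd. C^2 * (wt y)^2) UNIV"
    unfolding in_l2_def by (intro infsum_mono s b)
  also have "\<dots> = C^2 * Mw TYPE('d)"
    by (simp add: Mw_def infsum_cmult_right')
  finally show "infsum (\<lambda>y. (norm (f y))^2) UNIV \<le> C^2 * Mw TYPE('d)" .
qed



lemma infsum_diff':
  fixes f g :: "'a \<Rightarrow> complex"
  assumes "f summable_on A" "g summable_on A"
  shows "infsum (\<lambda>y. f y - g y) A = infsum f A - infsum g A"
proof -
  have "infsum (\<lambda>y. f y + - g y) A = infsum f A + infsum (\<lambda>y. - g y) A"
    using assms by (intro infsum_add) (auto simp: summable_on_uminus)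
  then show ?thesis by (simp add: infsum_uminus)
qed

lemma infsum_single':
  fixes c :: complex
  shows "infsum (\<lambda>y. if y = x then c else 0) UNIV = c"
proof -
  have "infsum (\<lambda>y. if y = x then c else 0) UNIV = infsum (\<lambda>y. if y = x then c else 0) {x}"
    by (rule infsum_cong_neutral) auto
  then show ?thesis by simp
qed

lemma delta_prod_summable:
  assumes "in_l2 p" "in_l2 q"
  shows "(\<lambda>y. cnj (q y) * lat_Delta p y) summable_on UNIV"
    and "(\<lambda>y. cnj (lat_Delta q y) * p y) summable_on UNIV"
proof -
  show "(\<lambda>y. cnj (q y) * lat_Delta p y) summable_on UNIV"
    unfolding lat_Delta_eq sum_distrib_left
    by (intro summable_on_sum_fin unitv_finite l2_prod_summable in_l2_shift assms)
  show "(\<lambda>y. cnj (lat_Delta q y) * p y) summable_on UNIV"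
    unfolding lat_Delta_eq cnj_sum sum_distrib_right
    by (intro summable_on_sum_fin unitv_finite l2_prod_summable in_l2_shift assms)
qed

lemma eig_Delta:
  assumes "\<forall>y. anderson_H V p y = of_real E * p y"
  shows "lat_Delta p y = (of_real (V y) - of_real E) * p y"
  using assms[rule_format, of y] unfolding anderson_H_def by (simp add: algebra_simps)

lemma sym_diff_zero:
  assumes "in_l2 p" "in_l2 q"
  shows "infsum (\<lambda>y. cnj (q y) * lat_Delta p y - cnj (lat_Delta q y) * p y) UNIV = 0"
  using delta_sym[OF assms] delta_prod_summable[OF assms]
  by (subst infsum_diff') auto

lemma unique_coupling:
  fixes V :: "int ^ 'd \<Rightarrow> real"
  assumes p: "in_l2 p" and q: "in_l2 q"
    and ep: "\<forall>y. anderson_H (V(x := a)) p y = of_real E * p y"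
    and eq: "\<forall>y. anderson_H (V(x := b)) q y = of_real E * q y"
    and px: "p x = 1" and qx: "q x = 1"
  shows "a = b"
proof -
  have pt: "cnj (q y) * lat_Delta p y - cnj (lat_Delta q y) * p y
        = (if y = x then complex_of_real (a - b) else 0)" for y
    unfolding eig_Delta[OF ep] eig_Delta[OF eq]
    by (auto simp: px qx algebra_simps)
  have "complex_of_real (a - b) = 0"
    using sym_diff_zero[OF p q] unfolding pt infsum_single' .
  then show ?thesis by simp
qed

lemma orth_eig:
  fixes W :: "int ^ 'd \<Rightarrow> real"
  assumes p: "in_l2 p" and q: "in_l2 q"
    and ep: "\<forall>y. anderson_H W p y = of_real E1 * p y"
    and eq: "\<forall>y. anderson_H W q y = of_real E2 * q y"
    and ne: "E1 \<noteq> E2"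
  shows "infsum (\<lambda>y. cnj (q y) * p y) UNIV = 0"
proof -
  have pt: "cnj (q y) * lat_Delta p y - cnj (lat_Delta q y) * p y
        = complex_of_real (E2 - E1) * (cnj (q y) * p y)" for y
    unfolding eig_Delta[OF ep] eig_Delta[OF eq]
    by (auto simp: algebra_simps)
  have "complex_of_real (E2 - E1) * infsum (\<lambda>y. cnj (q y) * p y) UNIV = 0"
    using sym_diff_zero[OF p q] unfolding pt by (simp add: infsum_cmult_right')
  then show ?thesis using ne by simp
qed

lemma card_orth_bound:
  fixes \<psi> :: "'i \<Rightarrow> int ^ 'd \<Rightarrow> complex"
  assumes F: "finite F" and A: "0 \<le> A"
    and l2: "\<And>i. i \<in> F \<Longrightarrow> in_l2 (\<psi> i)"
    and nz: "\<And>i. i \<in> F \<Longrightarrow> \<psi> i z = 1"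
    and nb: "\<And>i. i \<in> F \<Longrightarrow> infsum (\<lambda>y. (norm (\<psi> i y))^2) UNIV \<le> A"
    and orth: "\<And>i j. i \<in> F \<Longrightarrow> j \<in> F \<Longrightarrow> i \<noteq> j \<Longrightarrow> infsum (\<lambda>y. cnj (\<psi> j y) * \<psi> i y) UNIV = 0"
  shows "real (card F) \<le> A"
proof -
  define f where "f y = (\<Sum>i\<in>F. \<psi> i y)" for y
  define n where "n = real (card F)"
  have sm: "(\<lambda>y. \<psi> i y * cnj (\<psi> j y)) summable_on UNIV" if "i \<in> F" "j \<in> F" for i j
    using l2_prod_summable[of "\<psi> i" "\<psi> j"] l2 that by (simp add: mult.commute)
  define G where "G y = (\<Sum>i\<in>F. \<Sum>j\<in>F. \<psi> i y * cnj (\<psi> j y))" for y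
  have hG: "complex_of_real ((norm (f y))^2) = G y" for y
    unfolding complex_norm_square f_def G_def cnj_sum sum_distrib_left sum_distrib_right
    by (rule sum.swap)
  have Gs: "G summable_on UNIV"
    unfolding G_def using F sm by (intro summable_on_sum_fin) auto
  have nfG: "(norm (f y))^2 = Re (G y)" for y
    using hG[of y] by (metis Re_complex_of_real)
  have fl2: "(\<lambda>y. (norm (f y))^2) summable_on UNIV"
    unfolding nfG by (rule summable_on_Re[OF Gs])
  have diag: "infsum (\<lambda>y. \<psi> i y * cnj (\<psi> i y)) UNIV
      = complex_of_real (infsum (\<lambda>y. (norm (\<psi> i y))^2) UNIV)" if "i \<in> F" for i
  proof -
    have "((\<lambda>y. complex_of_real ((norm (\<psi> i y))^2)) has_sum
            complex_of_real (infsum (\<lambda>y. (norm (\<psi> i y))^2) UNIV)) UNIV"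
      using l2[OF that] unfolding in_l2_def by (intro has_sum_of_real has_sum_infsum)
    then show ?thesis unfolding complex_norm_square by (rule infsumI)
  qed
  have "infsum G UNIV = (\<Sum>i\<in>F. \<Sum>j\<in>F. infsum (\<lambda>y. \<psi> i y * cnj (\<psi> j y)) UNIV)"
    unfolding G_def using F sm
    by (subst infsum_sum_fin) (auto intro!: summable_on_sum_fin sum.cong infsum_sum_fin)
  also have "\<dots> = (\<Sum>i\<in>F. infsum (\<lambda>y. \<psi> i y * cnj (\<psi> i y)) UNIV)"
  proof (rule sum.cong[OF refl])
    fix i assume i: "i \<in> F"
    have "(\<Sum>j\<in>F. infsum (\<lambda>y. \<psi> i y * cnj (\<psi> j y)) UNIV)
        = infsum (\<lambda>y. \<psi> i y * cnj (\<psi> i y)) UNIV + (\<Sum>j\<in>F-{i}. infsum (\<lambda>y. \<psi> i y * cnj (\<psi> j y)) UNIV)"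
      using F i by (simp add: sum.remove)
    also have "(\<Sum>j\<in>F-{i}. infsum (\<lambda>y. \<psi> i y * cnj (\<psi> j y)) UNIV) = 0"
      using orth i by (intro sum.neutral) (auto simp: mult.commute)
    finally show "(\<Sum>j\<in>F. infsum (\<lambda>y. \<psi> i y * cnj (\<psi> j y)) UNIV) = infsum (\<lambda>y. \<psi> i y * cnj (\<psi> i y)) UNIV"
      by simp
  qed
  also have "\<dots> = complex_of_real (\<Sum>i\<in>F. infsum (\<lambda>y. (norm (\<psi> i y))^2) UNIV)"
    using diag by simp
  finally have iG: "infsum G UNIV = complex_of_real (\<Sum>i\<in>F. infsum (\<lambda>y. (norm (\<psi> i y))^2) UNIV)" .
  have Nf: "infsum (\<lambda>y. (norm (f y))^2) UNIV = (\<Sum>i\<in>F. infsum (\<lambda>y. (norm (\<psi> i y))^2) UNIV)"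
    unfolding nfG infsum_Re[OF Gs] iG by simp
  have up: "infsum (\<lambda>y. (norm (f y))^2) UNIV \<le> n * A"
    unfolding Nf n_def using sum_bounded_above[of F "\<lambda>i. infsum (\<lambda>y. (norm (\<psi> i y))^2) UNIV" A] nb
    by auto
  have fz: "f z = of_nat (card F)"
    unfolding f_def using nz by simp
  have "(norm (f z))^2 \<le> infsum (\<lambda>y. (norm (f y))^2) UNIV"
    using finite_sum_le_infsum[OF fl2, of "{z}"] by simp
  then have "n^2 \<le> n * A"
    using up fz by (simp add: n_def)
  moreover have "0 \<le> n" by (simp add: n_def)
  ultimately show ?thesis
    unfolding n_def[symmetric] using A
    by (cases "n = 0") (auto simp: power2_eq_square)
qed



definition eigeq :: "(int ^ 'd \<Rightarrow> real) \<Rightarrow> real \<Rightarrow> (int ^ 'd \<Rightarrow> complex) \<Rightarrow> bool" where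
  "eigeq V E f \<longleftrightarrow> (\<forall>y. anderson_H V f y = of_real E * f y)"

definition Nset :: "int ^ 'd \<Rightarrow> int ^ 'd \<Rightarrow> nat \<Rightarrow> (int ^ 'd \<Rightarrow> real) set" where
  "Nset x z C = {V. \<exists>E \<psi> \<phi>. \<bar>E\<bar> \<le> real C \<and> decayC (real C) \<psi> \<and> decayC (real C) \<phi>
      \<and> \<psi> x = 0 \<and> \<psi> z = 1 \<and> \<phi> x = 1 \<and> eigeq V E \<psi> \<and> eigeq V E \<phi>}"

lemma H_vanish:
  assumes "\<psi> x = 0"
  shows "anderson_H (V(x := a)) \<psi> y = anderson_H (V(x := b)) \<psi> y"
  using assms unfolding anderson_H_def by auto

lemma Mw_nonneg: "0 \<le> Mw TYPE('d::finite)"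
  unfolding Mw_def by (rule infsum_nonneg) auto

lemma section_finite:
  fixes V :: "int ^ 'd \<Rightarrow> real"
  shows "finite {v. V(x := v) \<in> Nset x z C}"
proof -
  define T where "T = {v. V(x := v) \<in> Nset x z C}"
  define P where "P v t \<longleftrightarrow> (case t of (E, \<psi>, \<phi>) \<Rightarrow> \<bar>E\<bar> \<le> real C \<and> decayC (real C) \<psi> \<and> decayC (real C) \<phi>
      \<and> \<psi> x = 0 \<and> \<psi> z = 1 \<and> \<phi> x = 1 \<and> eigeq (V(x := v)) E \<psi> \<and> eigeq (V(x := v)) E \<phi>)" for v t
  have "\<forall>v\<in>T. \<exists>t. P v t"
    unfolding T_def Nset_def P_def by force
  then obtain t where t: "\<And>v. v \<in> T \<Longrightarrow> P v (t v)"
    by (metis bchoice)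
  define Ef where "Ef v = fst (t v)" for v
  define ps where "ps v = fst (snd (t v))" for v
  define ph where "ph v = snd (snd (t v))" for v
  have tv: "\<bar>Ef v\<bar> \<le> real C \<and> decayC (real C) (ps v) \<and> decayC (real C) (ph v)
      \<and> ps v x = 0 \<and> ps v z = 1 \<and> ph v x = 1 \<and> eigeq (V(x := v)) (Ef v) (ps v) \<and> eigeq (V(x := v)) (Ef v) (ph v)"
    if "v \<in> T" for v
    using t[OF that] unfolding P_def Ef_def ps_def ph_def by (auto split: prod.splits)
  have inj: "inj_on Ef T"
  proof (rule inj_onI)
    fix v w assume v: "v \<in> T" and w: "w \<in> T" and e: "Ef v = Ef w"
    show "v = w"
    proof (rule unique_coupling)
      show "in_l2 (ph v)" using tv[OF v] decayC_l2(1) by blast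
      show "in_l2 (ph w)" using tv[OF w] decayC_l2(1) by blast
      show "\<forall>y. anderson_H (V(x := v)) (ph v) y = of_real (Ef v) * ph v y"
        using tv[OF v] by (simp add: eigeq_def)
      show "\<forall>y. anderson_H (V(x := w)) (ph w) y = of_real (Ef v) * ph w y"
        using tv[OF w] e by (simp add: eigeq_def)
    qed (use tv[OF v] tv[OF w] in auto)
  qed
  have bound: "real (card S) \<le> (real C)^2 * Mw TYPE('d)" if S: "finite S" "S \<subseteq> T" for S
  proof (rule card_orth_bound[where \<psi>=ps and z=z])
    show "0 \<le> (real C)^2 * Mw TYPE('d)" using Mw_nonneg[where 'd='d] by simp
    fix i assume i: "i \<in> S"
    then have iT: "i \<in> T" using S by auto
    show "in_l2 (ps i)" using tv[OF iT] decayC_l2(1) by blast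
    show "ps i z = 1" using tv[OF iT] by simp
    show "infsum (\<lambda>y. (norm (ps i y))^2) UNIV \<le> (real C)^2 * Mw TYPE('d)"
      using tv[OF iT] decayC_l2(2) by blast
    fix j assume j: "j \<in> S" and ij: "i \<noteq> j"
    then have jT: "j \<in> T" using S by auto
    have eig0: "eigeq (V(x := 0)) (Ef k) (ps k)" if "k \<in> T" for k
      using tv[OF that] H_vanish[where \<psi>="ps k" and x=x and V=V and a=k and b=0] by (simp add: eigeq_def)
    show "infsum (\<lambda>y. cnj (ps j y) * ps i y) UNIV = 0"
    proof (rule orth_eig)
      show "in_l2 (ps i)" using tv[OF iT] decayC_l2(1) by blast
      show "in_l2 (ps j)" using tv[OF jT] decayC_l2(1) by blast
      show "\<forall>y. anderson_H (V(x := 0)) (ps i) y = of_real (Ef i) * ps i y"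
        using eig0[OF iT] by (simp add: eigeq_def)
      show "\<forall>y. anderson_H (V(x := 0)) (ps j) y = of_real (Ef j) * ps j y"
        using eig0[OF jT] by (simp add: eigeq_def)
      show "Ef i \<noteq> Ef j" using inj iT jT ij by (auto dest: inj_onD)
    qed
  qed (use S in auto)
  show ?thesis
  proof (rule ccontr)
    assume "\<not> finite {v. V(x := v) \<in> Nset x z C}"
    then have "infinite T" by (simp add: T_def)
    then obtain S where S: "finite S" "card S = Suc (nat \<lceil>(real C)^2 * Mw TYPE('d)\<rceil>)" "S \<subseteq> T"
      using infinite_arbitrarily_large by blast
    have "real (card S) \<le> (real C)^2 * Mw TYPE('d)" using bound S by blast
    moreover have "(real C)^2 * Mw TYPE('d) < real (card S)"
      using S(2) by linarith
    ultimately show False by linarith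
  qed
qed



lemma Delta_lin: "lat_Delta (\<lambda>y. a * f y + b * g y) y = a * lat_Delta f y + b * lat_Delta g y"
  unfolding lat_Delta_def by (simp add: sum.distrib sum_distrib_left)

lemma H_lin: "anderson_H V (\<lambda>y. a * f y + b * g y) y = a * anderson_H V f y + b * anderson_H V g y"
  unfolding anderson_H_def Delta_lin by (simp add: algebra_simps)

lemma eigeq_lin:
  assumes "eigeq V E f" "eigeq V E g"
  shows "eigeq V E (\<lambda>y. a * f y + b * g y)"
  using assms unfolding eigeq_def H_lin by (simp add: algebra_simps)

lemma decayC_lin:
  assumes "decayC C1 f" "decayC C2 g"
  shows "decayC (norm a * C1 + norm b * C2) (\<lambda>y. a * f y + b * g y)"
  unfolding decayC_def
proof
  fix y
  have "norm (a * f y + b * g y) \<le> norm (a * f y) + norm (b * g y)"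
    by (rule norm_triangle_ineq)
  also have "\<dots> = norm a * norm (f y) + norm b * norm (g y)"
    by (simp add: norm_mult)
  also have "\<dots> \<le> norm a * (C1 * wt y) + norm b * (C2 * wt y)"
    using assms unfolding decayC_def by (intro add_mono mult_left_mono) auto
  finally show "norm (a * f y + b * g y) \<le> (norm a * C1 + norm b * C2) * wt y"
    by (simp add: algebra_simps)
qed

lemma decayC_mono: "decayC C f \<Longrightarrow> C \<le> C' \<Longrightarrow> decayC C' f"
proof -
  assume a: "decayC C f" "C \<le> C'"
  show ?thesis unfolding decayC_def
  proof
    fix y
    have "norm (f y) \<le> C * wt y" using a(1) by (simp add: decayC_def)
    also have "\<dots> \<le> C' * wt y" using a(2) wt_pos[of y] by (intro mult_right_mono) auto
    finally show "norm (f y) \<le> C' * wt y" .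
  qed
qed

lemma fast_decayC:
  fixes f :: "int ^ 'd \<Rightarrow> complex"
  assumes "fast_decaying f"
  shows "\<exists>C. decayC C f"
proof -
  obtain \<beta> C where b: "\<beta> > 5 * real CARD('d) / 2" and C: "\<And>y. norm (f y) \<le> C * jbracket y powr (- \<beta>)"
    using assms unfolding fast_decaying_def has_decay_def by blast
  have C0: "0 \<le> C"
  proof -
    have "0 \<le> C * jbracket (0::int ^ 'd) powr (- \<beta>)" by (rule order_trans[OF norm_ge_zero C])
    moreover have "0 < jbracket (0::int ^ 'd) powr (- \<beta>)" using jbracket_ge1[of "0::int ^ 'd"] by simp
    ultimately show ?thesis by (simp add: zero_le_mult_iff)
  qed
  have "decayC C f" unfolding decayC_def wt_def
  proof
    fix y :: "int ^ 'd"
    have "jbracket y powr (- \<beta>) \<le> jbracket y powr (- real CARD('d))"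
      using b jbracket_ge1[of y] by (intro powr_mono) auto
    then show "norm (f y) \<le> C * jbracket y powr (- real CARD('d))"
    proof -
      have "norm (f y) \<le> C * jbracket y powr (- \<beta>)" by (rule C)
      also have "\<dots> \<le> C * jbracket y powr (- real CARD('d))"
        using C0 \<open>jbracket y powr (- \<beta>) \<le> _\<close> by (rule mult_left_mono[rotated])
      finally show ?thesis .
    qed
  qed
  then show ?thesis by blast
qed

lemma cover:
  fixes V :: "int ^ 'd \<Rightarrow> real"
  assumes "is_eigenfunction V E \<phi>1" "is_eigenfunction V E \<phi>2"
    and "fast_decaying \<phi>1" "fast_decaying \<phi>2" "lin_indep2 \<phi>1 \<phi>2"
  shows "\<exists>x z C. V \<in> Nset x z C"
proof -
  obtain C1 where C1: "decayC C1 \<phi>1" using fast_decayC assms(3) by blast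
  obtain C2 where C2: "decayC C2 \<phi>2" using fast_decayC assms(4) by blast
  have e1: "eigeq V E \<phi>1" and e2: "eigeq V E \<phi>2"
    using assms(1,2) by (auto simp: is_eigenfunction_def eigeq_def)
  obtain x where x: "\<phi>1 x \<noteq> 0"
    using assms(1) unfolding is_eigenfunction_def by auto
  define \<psi>0 where "\<psi>0 y = \<phi>1 x * \<phi>2 y + (- \<phi>2 x) * \<phi>1 y" for y
  obtain z where z: "\<psi>0 z \<noteq> 0"
  proof (rule ccontr)
    assume "\<not> thesis"
    with that have "\<forall>y. (- \<phi>2 x) * \<phi>1 y + \<phi>1 x * \<phi>2 y = 0"
      unfolding \<psi>0_def by (auto simp: add.commute)
    then have "\<phi>1 x = 0" using assms(5) unfolding lin_indep2_def by blast
    then show False using x by simp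
  qed
  define \<psi> where "\<psi> y = (\<phi>1 x / \<psi>0 z) * \<phi>2 y + (- \<phi>2 x / \<psi>0 z) * \<phi>1 y" for y
  define \<phi> where "\<phi> y = (1 / \<phi>1 x) * \<phi>1 y + 0 * \<phi>2 y" for y
  have \<psi>eq: "\<psi> y = \<psi>0 y / \<psi>0 z" for y
    unfolding \<psi>_def \<psi>0_def by (simp add: add_divide_distrib diff_divide_distrib)
  have e\<psi>: "eigeq V E \<psi>" unfolding \<psi>_def by (intro eigeq_lin e1 e2)
  have e\<phi>: "eigeq V E \<phi>" unfolding \<phi>_def by (intro eigeq_lin e1 e2)
  have d\<psi>: "decayC (norm (\<phi>1 x / \<psi>0 z) * C2 + norm (- \<phi>2 x / \<psi>0 z) * C1) \<psi>"
    unfolding \<psi>_def by (intro decayC_lin C1 C2)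
  have d\<phi>: "decayC (norm (1 / \<phi>1 x) * C1 + norm (0::complex) * C2) \<phi>"
    unfolding \<phi>_def by (intro decayC_lin C1 C2)
  define B where "B = max \<bar>E\<bar> (max (norm (\<phi>1 x / \<psi>0 z) * C2 + norm (- \<phi>2 x / \<psi>0 z) * C1)
                                (norm (1 / \<phi>1 x) * C1 + norm (0::complex) * C2))"
  define C where "C = nat \<lceil>B\<rceil>"
  have BC: "B \<le> real C" unfolding C_def by linarith
  have "V \<in> Nset x z C"
    unfolding Nset_def
  proof (intro CollectI exI conjI)
    show "\<bar>E\<bar> \<le> real C" using BC unfolding B_def by linarith
    show "decayC (real C) \<psi>" using BC unfolding B_def by (intro decayC_mono[OF d\<psi>]) linarith
    show "decayC (real C) \<phi>" using BC unfolding B_def by (intro decayC_mono[OF d\<phi>]) linarith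
    show "\<psi> x = 0" using \<psi>eq[of x] by (simp add: \<psi>0_def)
    show "\<psi> z = 1" using \<psi>eq[of z] z by simp
    show "\<phi> x = 1" unfolding \<phi>_def using x by simp
  qed (use e\<psi> e\<phi> in auto)
  then show ?thesis by blast
qed



lemma cont_app:
  "continuous_on S f \<Longrightarrow> continuous_on S (\<lambda>x. f x i)"
  by (rule continuous_on_product_then_coordinatewise)

definition Kset :: "real \<Rightarrow> (int ^ 'd \<Rightarrow> complex) set" where
  "Kset C = {\<psi>. decayC C \<psi>}"

lemma Kset_compact: "compact (Kset C :: (int ^ 'd \<Rightarrow> complex) set)"
proof -
  have eq: "Kset C = Pi\<^sub>E UNIV (\<lambda>y::int ^ 'd. cball 0 (C * wt y))"
    by (auto simp: Kset_def decayC_def PiE_iff)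
  have "compactin (product_topology (\<lambda>_. euclidean) UNIV) (Pi\<^sub>E UNIV (\<lambda>y::int ^ 'd. cball (0::complex) (C * wt y)))"
    by (subst compactin_PiE) auto
  then show ?thesis unfolding eq euclidean_product_topology by (simp add: compactin_euclidean_iff)
qed

lemma anderson_H_cont:
  fixes g :: "'a::topological_space \<Rightarrow> (int ^ 'd \<Rightarrow> real)" and h :: "'a \<Rightarrow> (int ^ 'd \<Rightarrow> complex)"
  assumes "continuous_on UNIV g" "continuous_on UNIV h"
  shows "continuous_on UNIV (\<lambda>p. anderson_H (g p) (h p) y)"
proof -
  have c1: "continuous_on UNIV (\<lambda>p. h p w)" for w by (rule cont_app[OF assms(2)])
  have c2: "continuous_on UNIV (\<lambda>p. g p y)" by (rule cont_app[OF assms(1)])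
  show ?thesis
    unfolding anderson_H_def lat_Delta_def
    by (intro continuous_on_add continuous_on_minus continuous_on_sum continuous_on_mult c1 c2
          continuous_on_of_real)
qed

definition T0set :: "int ^ 'd \<Rightarrow> int ^ 'd \<Rightarrow>
   ((int ^ 'd \<Rightarrow> real) \<times> real \<times> (int ^ 'd \<Rightarrow> complex) \<times> (int ^ 'd \<Rightarrow> complex)) set" where
  "T0set x z = {p. fst (snd (snd p)) x = 0 \<and> fst (snd (snd p)) z = 1 \<and> snd (snd (snd p)) x = 1
     \<and> (\<forall>y. anderson_H (fst p) (fst (snd (snd p))) y = of_real (fst (snd p)) * fst (snd (snd p)) y)
     \<and> (\<forall>y. anderson_H (fst p) (snd (snd (snd p))) y = of_real (fst (snd p)) * snd (snd (snd p)) y)}"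

lemma T0set_closed: "closed (T0set x z)"
proof -
  have cV: "continuous_on UNIV (\<lambda>p::((int ^ 'd \<Rightarrow> real) \<times> real \<times> (int ^ 'd \<Rightarrow> complex) \<times> (int ^ 'd \<Rightarrow> complex)). fst p)"
    by (intro continuous_intros)
  have cE: "continuous_on UNIV (\<lambda>p::((int ^ 'd \<Rightarrow> real) \<times> real \<times> (int ^ 'd \<Rightarrow> complex) \<times> (int ^ 'd \<Rightarrow> complex)). fst (snd p))"
    by (intro continuous_intros)
  have c\<psi>: "continuous_on UNIV (\<lambda>p::((int ^ 'd \<Rightarrow> real) \<times> real \<times> (int ^ 'd \<Rightarrow> complex) \<times> (int ^ 'd \<Rightarrow> complex)). fst (snd (snd p)))"
    by (intro continuous_intros)
  have c\<phi>: "continuous_on UNIV (\<lambda>p::((int ^ 'd \<Rightarrow> real) \<times> real \<times> (int ^ 'd \<Rightarrow> complex) \<times> (int ^ 'd \<Rightarrow> complex)). snd (snd (snd p)))"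
    by (intro continuous_intros)
  note a1 = cont_app[OF c\<psi>] and a2 = cont_app[OF c\<phi>]
  have h1: "continuous_on UNIV (\<lambda>p::((int ^ 'd \<Rightarrow> real) \<times> real \<times> (int ^ 'd \<Rightarrow> complex) \<times> (int ^ 'd \<Rightarrow> complex)).
      anderson_H (fst p) (fst (snd (snd p))) y)" for y
    by (rule anderson_H_cont[OF cV c\<psi>])
  have h2: "continuous_on UNIV (\<lambda>p::((int ^ 'd \<Rightarrow> real) \<times> real \<times> (int ^ 'd \<Rightarrow> complex) \<times> (int ^ 'd \<Rightarrow> complex)).
      anderson_H (fst p) (snd (snd (snd p))) y)" for y
    by (rule anderson_H_cont[OF cV c\<phi>])
  have m1: "continuous_on UNIV (\<lambda>p::((int ^ 'd \<Rightarrow> real) \<times> real \<times> (int ^ 'd \<Rightarrow> complex) \<times> (int ^ 'd \<Rightarrow> complex)).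
      complex_of_real (fst (snd p)) * fst (snd (snd p)) y)" for y
    by (intro continuous_on_mult continuous_on_of_real cE a1)
  have m2: "continuous_on UNIV (\<lambda>p::((int ^ 'd \<Rightarrow> real) \<times> real \<times> (int ^ 'd \<Rightarrow> complex) \<times> (int ^ 'd \<Rightarrow> complex)).
      complex_of_real (fst (snd p)) * snd (snd (snd p)) y)" for y
    by (intro continuous_on_mult continuous_on_of_real cE a2)
  show ?thesis
    unfolding T0set_def
    by (intro closed_Collect_conj closed_Collect_all closed_Collect_eq a1 a2 h1 h2 m1 m2
        continuous_on_const)
qed

definition Sset :: "nat \<Rightarrow> (real \<times> (int ^ 'd \<Rightarrow> complex) \<times> (int ^ 'd \<Rightarrow> complex)) set" where
  "Sset C = {- real C .. real C} \<times> Kset (real C) \<times> Kset (real C)"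

lemma Sset_compact: "compact (Sset C)"
  unfolding Sset_def by (intro compact_Times Kset_compact compact_Icc)

lemma Nset_eq: "Nset x z C = fst ` ((UNIV \<times> Sset C) \<inter> T0set x z)"
proof (rule set_eqI)
  fix V
  have "V \<in> fst ` ((UNIV \<times> Sset C) \<inter> T0set x z) \<longleftrightarrow> (\<exists>E \<psi> \<phi>. (V, E, \<psi>, \<phi>) \<in> (UNIV \<times> Sset C) \<inter> T0set x z)"
    by force
  also have "\<dots> \<longleftrightarrow> V \<in> Nset x z C"
    unfolding Nset_def Sset_def T0set_def Kset_def eigeq_def by (auto simp: abs_le_iff minus_le_iff)
  finally show "V \<in> Nset x z C \<longleftrightarrow> V \<in> fst ` ((UNIV \<times> Sset C) \<inter> T0set x z)" by simp
qed

lemma Nset_closed: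
  fixes x z :: "int ^ 'd"
  shows "closed (Nset x z C)"
proof -
  define S where "S = (Sset C :: (real \<times> (int ^ 'd \<Rightarrow> complex) \<times> (int ^ 'd \<Rightarrow> complex)) set)"
  have cs: "compact_space (subtopology euclidean S)"
    by (intro compact_space_subtopology) (simp add: compactin_euclidean_iff Sset_compact S_def)
  have "subtopology (prod_topology (euclidean :: (int ^ 'd \<Rightarrow> real) topology) euclidean) (UNIV \<times> S)
      = prod_topology (subtopology euclidean UNIV) (subtopology euclidean S)"
    by (rule subtopology_Times)
  then have top0: "subtopology euclidean (UNIV \<times> S) = prod_topology (euclidean :: (int ^ 'd \<Rightarrow> real) topology) (subtopology euclidean S)"
    by (simp only: prod_topology_euclidean subtopology_UNIV)
  note top = top0[symmetric]
  have cm: "closed_map (subtopology euclidean (UNIV \<times> S)) (euclidean :: (int ^ 'd \<Rightarrow> real) topology) fst"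
    using closed_map_fst[OF cs, where X="euclidean :: (int ^ 'd \<Rightarrow> real) topology"] unfolding top .
  have ce: "closedin euclidean (T0set x z)"
    using T0set_closed[of x z] by (simp only: closed_closedin)
  have "closedin (subtopology euclidean (UNIV \<times> S)) ((UNIV \<times> S) \<inter> T0set x z)"
    unfolding closedin_subtopology
    by (rule exI[of _ "T0set x z"]) (use ce in blast)
  then have "closedin (euclidean :: (int ^ 'd \<Rightarrow> real) topology) (fst ` ((UNIV \<times> S) \<inter> T0set x z))"
    using cm unfolding closed_map_def by blast
  then show ?thesis unfolding Nset_eq closed_closedin S_def .
qed

lemma Nset_borel: "Nset x z C \<in> sets borel"
  using Nset_closed by (rule borel_closed)



lemma merge_measurable:
  fixes M :: "real measure"
  shows "(\<lambda>(v, X). X(x := v)) \<in> measurable (M \<Otimes>\<^sub>M PiM (UNIV - {x}) (\<lambda>_. M)) (PiM (insert x (UNIV - {x})) (\<lambda>_. M))"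
  by measurable

lemma finite_null_density:
  fixes \<rho> :: "real \<Rightarrow> real"
  assumes meas: "\<rho> \<in> borel_measurable lborel" and fin: "finite A"
  shows "A \<in> null_sets (density lborel (\<lambda>t. ennreal (\<rho> t)))"
proof -
  have m: "(\<lambda>t. ennreal (\<rho> t)) \<in> borel_measurable lborel" using meas by measurable
  have n: "A \<in> null_sets lborel" using fin by (rule finite_imp_null_set_lborel)
  have "AE t in lborel. t \<in> A \<longrightarrow> ennreal (\<rho> t) = 0"
    by (rule AE_I'[OF n]) auto
  then show ?thesis using n by (subst null_sets_density_iff[OF m]) auto
qed

lemma Nset_null:
  fixes \<rho> :: "real \<Rightarrow> real" and x z :: "int ^ 'd"
  assumes meas: "\<rho> \<in> borel_measurable lborel"
    and prob: "prob_space (density lborel (\<lambda>t. ennreal (\<rho> t)))"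
  shows "Nset x z C \<in> null_sets (PiM (UNIV :: (int ^ 'd) set) (\<lambda>_. density lborel (\<lambda>t. ennreal (\<rho> t))))"
proof -
  define \<mu> where "\<mu> = density lborel (\<lambda>t. ennreal (\<rho> t))"
  define I where "I = (UNIV :: (int ^ 'd) set) - {x}"
  define Q where "Q = PiM I (\<lambda>_. \<mu>)"
  define f where "f = (\<lambda>(v :: real, X :: int ^ 'd \<Rightarrow> real). X(x := v))"
  have UI: "insert x I = UNIV" by (auto simp: I_def)
  have sm: "sets \<mu> = sets borel" by (simp add: \<mu>_def)
  have "sets (PiM (UNIV :: (int ^ 'd) set) (\<lambda>_. \<mu>)) = sets (PiM (UNIV :: (int ^ 'd) set) (\<lambda>_. (borel :: real measure)))"
    by (rule sets_PiM_cong) (auto simp: sm)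
  also have "\<dots> = sets borel" by (rule sets_PiM_equal_borel)
  finally have sN: "Nset x z C \<in> sets (PiM UNIV (\<lambda>_. \<mu>))"
    using Nset_borel by blast
  have D: "distr (\<mu> \<Otimes>\<^sub>M Q) (PiM (insert x I) (\<lambda>_. \<mu>)) f = PiM (insert x I) (\<lambda>_. \<mu>)"
    unfolding Q_def f_def using prob by (intro distr_pair_PiM_eq_PiM) (auto simp: \<mu>_def)
  have fm: "f \<in> measurable (\<mu> \<Otimes>\<^sub>M Q) (PiM (insert x I) (\<lambda>_. \<mu>))"
    unfolding f_def Q_def I_def by (rule merge_measurable)
  have sN': "Nset x z C \<in> sets (PiM (insert x I) (\<lambda>_. \<mu>))" using sN UI by simp
  define A where "A = f -` Nset x z C \<inter> space (\<mu> \<Otimes>\<^sub>M Q)"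
  have sA: "A \<in> sets (\<mu> \<Otimes>\<^sub>M Q)" unfolding A_def using fm sN' by (rule measurable_sets)
  interpret \<mu>: prob_space \<mu> using prob by (simp add: \<mu>_def)
  interpret Q: prob_space Q unfolding Q_def using prob by (intro prob_space_PiM) (auto simp: \<mu>_def)
  interpret pair_sigma_finite \<mu> Q
    by (intro pair_sigma_finite.intro \<mu>.sigma_finite_measure_axioms Q.sigma_finite_measure_axioms)
  have sec0: "emeasure \<mu> ((\<lambda>v. (v, y)) -` A) = 0" for y
  proof -
    have "(\<lambda>v. (v, y)) -` A \<subseteq> {v. y(x := v) \<in> Nset x z C}"
      by (auto simp: A_def f_def)
    then have "finite ((\<lambda>v. (v, y)) -` A)"
      using section_finite[of y x z C] by (rule finite_subset)
    then have "(\<lambda>v. (v, y)) -` A \<in> null_sets \<mu>"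
      unfolding \<mu>_def by (rule finite_null_density[OF meas])
    then show ?thesis by auto
  qed
  have "emeasure (PiM UNIV (\<lambda>_. \<mu>)) (Nset x z C) = emeasure (PiM (insert x I) (\<lambda>_. \<mu>)) (Nset x z C)"
    using UI by simp
  also have "\<dots> = emeasure (distr (\<mu> \<Otimes>\<^sub>M Q) (PiM (insert x I) (\<lambda>_. \<mu>)) f) (Nset x z C)"
    using D by simp
  also have "\<dots> = emeasure (\<mu> \<Otimes>\<^sub>M Q) A"
    unfolding A_def using fm sN' by (rule emeasure_distr)
  also have "\<dots> = (\<integral>\<^sup>+ y. emeasure \<mu> ((\<lambda>v. (v, y)) -` A) \<partial>Q)"
    using sA by (rule emeasure_pair_measure_alt2)
  also have "\<dots> = 0" by (simp add: sec0)
  finally show ?thesis using sN unfolding \<mu>_def by auto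
qed



theorem mainTheorem1:
  fixes \<rho> :: "real \<Rightarrow> real"
  assumes meas: "\<rho> \<in> borel_measurable lborel"
    and nonneg: "\<And>t. 0 \<le> \<rho> t"
    and bdd: "\<exists>B. \<forall>t. \<rho> t \<le> B"
    and prob: "prob_space (density lborel (\<lambda>t. ennreal (\<rho> t)))"
  shows "AE V in PiM (UNIV :: (int ^ 'd) set) (\<lambda>_. density lborel (\<lambda>t. ennreal (\<rho> t))).
           \<not> (\<exists>E \<phi>1 \<phi>2. is_eigenfunction V E \<phi>1 \<and> is_eigenfunction V E \<phi>2
                   \<and> fast_decaying \<phi>1 \<and> fast_decaying \<phi>2 \<and> lin_indep2 \<phi>1 \<phi>2)"
proof (rule AE_I')
  let ?M = "PiM (UNIV :: (int ^ 'd) set) (\<lambda>_. density lborel (\<lambda>t. ennreal (\<rho> t)))"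
  let ?J = "UNIV :: ((int ^ 'd) \<times> (int ^ 'd) \<times> nat) set"
  show "(\<Union>i\<in>?J. Nset (fst i) (fst (snd i)) (snd (snd i))) \<in> null_sets ?M"
    by (rule null_sets_UN') (auto intro: Nset_null[OF meas prob])
  show "{V \<in> space ?M. \<not> \<not> (\<exists>E \<phi>1 \<phi>2. is_eigenfunction V E \<phi>1 \<and> is_eigenfunction V E \<phi>2
                   \<and> fast_decaying \<phi>1 \<and> fast_decaying \<phi>2 \<and> lin_indep2 \<phi>1 \<phi>2)}
        \<subseteq> (\<Union>i\<in>?J. Nset (fst i) (fst (snd i)) (snd (snd i)))"
  proof
    fix V assume "V \<in> {V \<in> space ?M. \<not> \<not> (\<exists>E \<phi>1 \<phi>2. is_eigenfunction V E \<phi>1 \<and> is_eigenfunction V E \<phi>2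
                   \<and> fast_decaying \<phi>1 \<and> fast_decaying \<phi>2 \<and> lin_indep2 \<phi>1 \<phi>2)}"
    then obtain E \<phi>1 \<phi>2 where "is_eigenfunction V E \<phi>1" "is_eigenfunction V E \<phi>2"
      "fast_decaying \<phi>1" "fast_decaying \<phi>2" "lin_indep2 \<phi>1 \<phi>2" by blast
    then obtain x z C where "V \<in> Nset x z C" using cover by blast
    then show "V \<in> (\<Union>i\<in>?J. Nset (fst i) (fst (snd i)) (snd (snd i)))"
      by (intro UN_I[of "(x, z, C)"]) auto
  qed
qed


end
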